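(* Let $n,k$ be positive integers with $n \geq 3(n-k)$ and $n\geq k$, and let $C\in\mathcal{K}_k(n)$. Let $M_{n,k}=\{k+1,k+2,\dots,2n-k\}$. Then exactly $n-k$ chords of $C$ have their start point in $M_{n,k}$, and exactly $n-k$ chords of $C$ have their end point in $M_{n,k}$.
   Context: A linear chord diagram of size $n$ is a partition of $\{1,2,\dots,2n\}$ into blocks of size two, called chords. For a chord $c=\{s_c,e_c\}$ with $s_c<e_c$, $s_c$ is its start point, $e_c$ its end point, and its length is $e_c-s_c$. $\mathcal{K}_k(n)$ is the set of all linear chord diagrams of size $n$ in which every chord has length at least $k$. *)

theory Defs
  imports Main
begin

definition linear_chord_diagram :: "nat \<Rightarrow> nat set set \<Rightarrow> bool" where
  "linear_chord_diagram n C \<longleftrightarrow>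
     (\<forall>c\<in>C. card c = 2) \<and> \<Union>C = {1..2*n} \<and>
     (\<forall>c\<in>C. \<forall>d\<in>C. c \<noteq> d \<longrightarrow> c \<inter> d = {})"

definition start_pt :: "nat set \<Rightarrow> nat" where "start_pt c = Min c"
definition end_pt :: "nat set \<Rightarrow> nat" where "end_pt c = Max c"
definition chord_length :: "nat set \<Rightarrow> nat" where "chord_length c = end_pt c - start_pt c"

definition K :: "nat \<Rightarrow> nat \<Rightarrow> nat set set set" where
  "K k n = {C. linear_chord_diagram n C \<and> (\<forall>c\<in>C. chord_length c \<ge> k)}"

definition M :: "nat \<Rightarrow> nat \<Rightarrow> nat set" where "M n k = {k+1..2*n-k}"

end

theory Submission
  imports Defs
begin

lemma card_filter_sum: "finite C \<Longrightarrow> card {c\<in>C. P c} = (\<Sum>c\<in>C. if P c then 1 else (0::nat))"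
  by (simp add: sum.If_cases Int_def)

lemma card2_int: "(a::nat) < b \<Longrightarrow> card ({a,b} \<inter> S) = (if a\<in>S then 1 else 0) + (if b\<in>S then 1 else 0)"
  by (cases "a \<in> S"; cases "b \<in> S") (auto simp: Int_insert_left)

theorem lemma2:
  fixes n k :: nat and C :: "nat set set"
  assumes "n > 0" "k > 0" "n \<ge> 3 * (n - k)" "n \<ge> k" "C \<in> K k n"
  shows "card {c\<in>C. start_pt c \<in> M n k} = n - k \<and> card {c\<in>C. end_pt c \<in> M n k} = n - k"
proof -
  have lcd: "linear_chord_diagram n C" and len: "\<And>c. c \<in> C \<Longrightarrow> chord_length c \<ge> k"
    using assms(5) by (auto simp: K_def)
  have c2: "\<And>c. c\<in>C \<Longrightarrow> card c = 2" and U: "\<Union>C = {1..2*n}"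
    and dj: "\<And>c d. c\<in>C \<Longrightarrow> d\<in>C \<Longrightarrow> c \<noteq> d \<Longrightarrow> c \<inter> d = {}"
    using lcd by (auto simp: linear_chord_diagram_def)
  have finC: "finite C" using U by (metis finite_UnionD finite_atLeastAtMost)
  have shape: "c = {Min c, Max c} \<and> Min c < Max c \<and> Min c \<in> {1..2*n} \<and> Max c \<in> {1..2*n}
      \<and> Max c \<ge> Min c + k" if cC: "c \<in> C" for c
  proof -
    obtain x y where xy: "x \<noteq> y" "c = {x,y}" using c2[OF cC] by (auto simp: card_2_iff)
    have "c \<subseteq> {1..2*n}" using U cC by blast
    moreover have "chord_length c \<ge> k" using len[OF cC] .
    ultimately show ?thesis using xy
      by (auto simp: chord_length_def start_pt_def end_pt_def min_def max_def split: if_splits)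
  qed
  have count: "card (S \<inter> {1..2*n}) = (\<Sum>c\<in>C. (if Min c \<in> S then 1 else 0) + (if Max c \<in> S then 1 else 0))"
    for S :: "nat set"
  proof -
    have "S \<inter> {1..2*n} = (\<Union>c\<in>C. c \<inter> S)" using U by blast
    hence "card (S \<inter> {1..2*n}) = (\<Sum>c\<in>C. card (c \<inter> S))"
    proof -
      assume e: "S \<inter> {1..2*n} = (\<Union>c\<in>C. c \<inter> S)"
      have "\<And>c. c \<in> C \<Longrightarrow> finite (c \<inter> S)"
        using U by (metis Int_lower1 Sup_upper finite_atLeastAtMost finite_subset)
      thus ?thesis unfolding e using finC dj by (intro card_UN_disjoint) auto
    qed
    also have "\<dots> = (\<Sum>c\<in>C. (if Min c \<in> S then 1 else 0) + (if Max c \<in> S then 1 else 0))"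
    proof (rule sum.cong)
      fix c assume "c \<in> C"
      from shape[OF this] show "card (c \<inter> S) = (if Min c \<in> S then 1 else 0) + (if Max c \<in> S then 1 else 0)"
      proof -
        assume h: "c = {Min c, Max c} \<and> Min c < Max c \<and> Min c \<in> {1..2*n} \<and> Max c \<in> {1..2*n} \<and> Max c \<ge> Min c + k"
        hence "c = {Min c, Max c}" "Min c < Max c" by auto
        thus ?thesis by (metis card2_int)
      qed
    qed simp
    finally show ?thesis .
  qed
  have cardC: "card C = n"
  proof -
    have "2*n = card (UNIV \<inter> {1..2*n})" by simp
    also have "\<dots> = (\<Sum>c\<in>C. 2)" by (rule trans[OF count]) simp
    finally show ?thesis by simp
  qed
  have sh: "\<And>c. c\<in>C \<Longrightarrow> Min c < Max c \<and> 1 \<le> Min c \<and> Max c \<le> 2*n \<and> Min c + k \<le> Max c"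
    using shape by auto
  have nL: "\<And>c. c\<in>C \<Longrightarrow> Max c \<notin> {1..k}" using sh by fastforce
  have nR: "\<And>c. c\<in>C \<Longrightarrow> Min c \<notin> {2*n-k+1..2*n}"
  proof
    fix c assume "c\<in>C" "Min c \<in> {2*n-k+1..2*n}"
    with sh[of c] assms(4) show False by (simp, linarith)
  qed
  have sLM: "\<And>c. c\<in>C \<Longrightarrow> (Min c \<in> {1..k}) = (start_pt c \<notin> M n k)"
    unfolding start_pt_def M_def using sh nR by fastforce
  have eRM: "\<And>c. c\<in>C \<Longrightarrow> (Max c \<in> {2*n-k+1..2*n}) = (end_pt c \<notin> M n k)"
    unfolding end_pt_def M_def using sh nL by fastforce
  let ?L = "{1..k}" and ?R = "{2*n-k+1..2*n}"
  have kL: "k = (\<Sum>c\<in>C. if Min c \<in> ?L then 1 else 0)"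
  proof -
    have "k = card (?L \<inter> {1..2*n})" using assms(4) by (simp add: Int_absorb2)
    also have "\<dots> = (\<Sum>c\<in>C. if Min c \<in> ?L then 1 else 0)"
      unfolding count by (rule sum.cong) (auto simp del: atLeastAtMost_iff dest: nL nR)
    finally show ?thesis .
  qed
  have kR: "k = (\<Sum>c\<in>C. if Max c \<in> ?R then 1 else 0)"
  proof -
    have "?R \<inter> {1..2*n} = ?R" using assms(1,2,4) by auto
    hence "k = card (?R \<inter> {1..2*n})" using assms(4) by simp
    also have "\<dots> = (\<Sum>c\<in>C. if Max c \<in> ?R then 1 else 0)"
      unfolding count by (rule sum.cong) (auto simp del: atLeastAtMost_iff dest: nL nR)
    finally show ?thesis .
  qed
  have s1: "card {c\<in>C. start_pt c \<in> M n k} = n - k"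
  proof -
    have "n = (\<Sum>c\<in>C. 1::nat)" using cardC by simp
    also have "\<dots> = (\<Sum>c\<in>C. (if Min c \<in> ?L then 1 else 0) + (if start_pt c \<in> M n k then 1 else 0))"
      by (rule sum.cong) (simp_all only: sLM, simp)
    also have "\<dots> = k + card {c\<in>C. start_pt c \<in> M n k}"
      by (subst sum.distrib, subst kL[symmetric], simp add: card_filter_sum[OF finC])
    finally show ?thesis by simp
  qed
  have s2: "card {c\<in>C. end_pt c \<in> M n k} = n - k"
  proof -
    have "n = (\<Sum>c\<in>C. 1::nat)" using cardC by simp
    also have "\<dots> = (\<Sum>c\<in>C. (if Max c \<in> ?R then 1 else 0) + (if end_pt c \<in> M n k then 1 else 0))"
      by (rule sum.cong) (simp_all only: eRM, simp)
    also have "\<dots> = k + card {c\<in>C. end_pt c \<in> M n k}"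
      by (subst sum.distrib, subst kR[symmetric], simp add: card_filter_sum[OF finC])
    finally show ?thesis by simp
  qed
  show ?thesis using s1 s2 by simp
qed

end
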